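(* Let $\varphi_0\in\mathbb{R}$ and let $v$ be a smooth function with $v(\varphi)>0$ and $v'(\varphi)>0$ for all $\varphi\ge\varphi_0$. Let $R_0=\{(\varphi,h)\in\mathbb{R}^2:\varphi_0\le\varphi<\infty,\ \sqrt{v(\varphi)}<h<\infty\}$ and let $\Gamma$ be the curve $h=\sqrt{v(\varphi)}$. Let $h$ be the solution of $h'=\sqrt{h^2-v}$ with initial value $h(\varphi_0)=h_0$, $h_0>\sqrt{v(\varphi_0)}$. Then exactly one of the following holds: either (type A) there is a finite $\varphi_1>\varphi_0$ such that the solution exists in $R_0$ on $[\varphi_0,\varphi_1)$ and reaches the lower boundary $\Gamma$ at $\varphi_1$, i.e. $h(\varphi)\to\sqrt{v(\varphi_1)}$ as $\varphi\to\varphi_1^-$, with a horizontal half-tangent there ($h'(\varphi)\to0$); or (type B) the solution exists and remains in $R_0$ for all $\varphi>\varphi_0$. *)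

theory Defs
  imports "HOL-Analysis.Analysis"
begin

definition ode_sol_in_R0 ::
  "(real \<Rightarrow> real) \<Rightarrow> real \<Rightarrow> real \<Rightarrow> real set \<Rightarrow> (real \<Rightarrow> real) \<Rightarrow> (real \<Rightarrow> real) \<Rightarrow> bool" where
  "ode_sol_in_R0 v phi0 h0 I h dh \<longleftrightarrow>
     h phi0 = h0 \<and>
     (\<forall>phi\<in>I. (h has_real_derivative dh phi) (at phi within I)
               \<and> dh phi = sqrt ((h phi)\<^sup>2 - v phi)
               \<and> sqrt (v phi) < h phi)"

end

theory Submission
  imports Defs
begin


lemma at_Ici_eq:
  fixes a t b :: real
  assumes "a \<le> t" "t < b"
  shows "at t within {a..b} = at t within {a..}"
  by (rule at_within_nhd[of t "{..<b}"]) (use assms in auto)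

lemma cont_Ici:
  fixes f :: "real \<Rightarrow> real"
  assumes "\<And>b. b > a \<Longrightarrow> continuous_on {a..b} f"
  shows "continuous_on {a..} f"
  unfolding continuous_on_eq_continuous_within
proof
  fix t assume t: "t \<in> {a..}"
  have "continuous (at t within {a..t+1}) f"
    using assms[of "t+1"] t by (auto simp: continuous_on_eq_continuous_within)
  then show "continuous (at t within {a..}) f"
    using at_Ici_eq[of a t "t+1"] t by auto
qed

lemma int_cont:
  fixes g :: "real \<Rightarrow> real"
  assumes "continuous_on {a..} g"
  shows "continuous_on {a..} (\<lambda>t. integral {a..t} g)"
proof (rule cont_Ici)
  fix b assume "b > a"
  have "continuous_on {a..b} g" using assms by (rule continuous_on_subset) auto
  then show "continuous_on {a..b} (\<lambda>t. integral {a..t} g)"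
    by (intro indefinite_integral_continuous_1 integrable_continuous_real)
qed

lemma int_deriv:
  fixes g :: "real \<Rightarrow> real"
  assumes "continuous_on {a..} g" "a \<le> t"
  shows "((\<lambda>x. integral {a..x} g) has_real_derivative g t) (at t within {a..})"
proof -
  have "continuous_on {a..t+1} g" using assms(1) by (rule continuous_on_subset) auto
  then have "((\<lambda>x. integral {a..x} g) has_real_derivative g t) (at t within {a..t+1})"
    using assms by (intro integral_has_real_derivative) auto
  then show ?thesis using at_Ici_eq[of a t "t+1"] assms by auto
qed

definition Gf :: "(real \<Rightarrow> real) \<Rightarrow> real \<Rightarrow> real \<Rightarrow> real" where
  "Gf v s y = sqrt (max (y^2 - v s) 0)"

lemma Gf_cont:
  assumes "continuous_on S v" "continuous_on S h"
  shows "continuous_on S (\<lambda>s. Gf v s (h s))"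
  unfolding Gf_def using assms by (intro continuous_intros)

lemma Gf_mono:
  assumes "0 \<le> y1" "y1 \<le> y2"
  shows "Gf v s y1 \<le> Gf v s y2"
  unfolding Gf_def using assms by (intro real_sqrt_le_mono max.mono power_mono diff_right_mono) auto

lemma Gf_nonneg: "Gf v s y \<ge> 0"
  unfolding Gf_def by auto

lemma Gf_le:
  assumes "0 \<le> y" "v s \<ge> 0"
  shows "Gf v s y \<le> y"
proof -
  have "Gf v s y \<le> sqrt (y^2)" unfolding Gf_def using assms by (intro real_sqrt_le_mono) auto
  then show ?thesis using assms by simp
qed

lemma exp_integral:
  fixes a t c :: real
  assumes "a \<le> t"
  shows "integral {a..t} (\<lambda>s. c * exp (s - a)) = c * exp (t - a) - c"
proof -
  have "((\<lambda>s. c * exp (s - a)) has_integral (c * exp (t - a) - c * exp (a - a))) {a..t}"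
    using assms
    by (intro fundamental_theorem_of_calculus)
       (auto simp: has_real_derivative_iff_has_vector_derivative[symmetric] intro!: derivative_eq_intros)
  from integral_unique[OF this] show ?thesis by simp
qed



lemma sub_Icc: "continuous_on {a..} (f::real\<Rightarrow>real) \<Longrightarrow> continuous_on {a..b} f"
  by (rule continuous_on_subset) auto

lemma existence:
  fixes v :: "real \<Rightarrow> real" and a h0 :: real
  assumes vc: "continuous_on {a..} v" and vnn: "\<And>s. s \<ge> a \<Longrightarrow> v s \<ge> 0" and h0: "h0 > 0"
  shows "\<exists>h. continuous_on {a..} h \<and> (\<forall>t\<ge>a. h0 \<le> h t \<and> h t = h0 + integral {a..t} (\<lambda>s. Gf v s (h s)))"
proof -
  define hs where "hs = rec_nat (\<lambda>t. h0) (\<lambda>n f t. h0 + integral {a..t} (\<lambda>s. Gf v s (f s)))"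
  have hs0: "hs 0 = (\<lambda>t. h0)" by (simp add: hs_def)
  have hsS: "hs (Suc n) = (\<lambda>t. h0 + integral {a..t} (\<lambda>s. Gf v s (hs n s)))" for n
    by (simp add: hs_def)
  have P: "continuous_on {a..} (hs n) \<and> (\<forall>t\<ge>a. h0 \<le> hs n t \<and> hs n t \<le> h0 * exp (t - a))" for n
  proof (induction n)
    case 0
    then show ?case using h0 by (auto simp: hs0)
  next
    case (Suc n)
    have c: "continuous_on {a..} (\<lambda>s. Gf v s (hs n s))"
      using Suc vc by (intro Gf_cont) auto
    have cS: "continuous_on {a..} (hs (Suc n))"
      unfolding hsS using int_cont[OF c] by (intro continuous_intros)
    have "h0 \<le> hs (Suc n) t \<and> hs (Suc n) t \<le> h0 * exp (t - a)" if t: "t \<ge> a" for t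
    proof -
      have ci: "continuous_on {a..t} (\<lambda>s. Gf v s (hs n s))"
        using c by (rule continuous_on_subset) auto
      have "integral {a..t} (\<lambda>s. Gf v s (hs n s)) \<ge> 0"
        by (intro integral_nonneg integrable_continuous_real ci) (auto simp: Gf_nonneg)
      moreover have "integral {a..t} (\<lambda>s. Gf v s (hs n s)) \<le> integral {a..t} (\<lambda>s. h0 * exp (s - a))"
      proof (intro integral_le integrable_continuous_real ci)
        show "continuous_on {a..t} (\<lambda>s. h0 * exp (s - a))" by (intro continuous_intros)
        fix s assume s: "s \<in> {a..t}"
        have "Gf v s (hs n s) \<le> hs n s" using Suc s h0 vnn[of s] by (intro Gf_le) auto
        also have "\<dots> \<le> h0 * exp (s - a)" using Suc s by auto
        finally show "Gf v s (hs n s) \<le> h0 * exp (s - a)" .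
      qed
      ultimately show ?thesis using exp_integral[OF t, of h0] by (simp add: hsS)
    qed
    then show ?case using cS by auto
  qed
  have Pc: "continuous_on {a..} (hs n)" for n using P by blast
  have Plo: "h0 \<le> hs n t" if "t \<ge> a" for n t using P that by blast
  have Pup: "hs n t \<le> h0 * exp (t - a)" if "t \<ge> a" for n t using P that by blast
  have M: "hs n t \<le> hs (Suc n) t" if "t \<ge> a" for n t
    using that
  proof (induction n arbitrary: t)
    case 0
    then show ?case using Plo[of t 1] by (simp add: hs0)
  next
    case (Suc n)
    have "integral {a..t} (\<lambda>s. Gf v s (hs n s)) \<le> integral {a..t} (\<lambda>s. Gf v s (hs (Suc n) s))"
    proof (intro integral_le integrable_continuous_real)
      show "continuous_on {a..t} (\<lambda>s. Gf v s (hs n s))"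
        using Pc[of n] vc by (intro Gf_cont sub_Icc)
      show "continuous_on {a..t} (\<lambda>s. Gf v s (hs (Suc n) s))"
        using Pc[of "Suc n"] vc by (intro Gf_cont sub_Icc)
      fix s assume s: "s \<in> {a..t}"
      show "Gf v s (hs n s) \<le> Gf v s (hs (Suc n) s)"
        using Suc.IH[of s] Plo[of s n] s h0 by (intro Gf_mono) auto
    qed
    then show ?case by (simp add: hsS[of "Suc n"] hsS[of n])
  qed
  define h where "h t = (SUP n. hs n t)" for t
  have lim: "(\<lambda>n. hs n t) \<longlonglongrightarrow> h t" if "t \<ge> a" for t
    unfolding h_def
  proof (rule LIMSEQ_incseq_SUP)
    show "bdd_above (range (\<lambda>n. hs n t))"
      using Pup that by (intro bdd_aboveI[of _ "h0 * exp (t - a)"]) auto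
    show "incseq (\<lambda>n. hs n t)" using M that by (intro incseq_SucI) auto
  qed
  have hge: "h0 \<le> h t" if "t \<ge> a" for t
    using lim[OF that] Plo that by (intro LIMSEQ_le_const[of _ "h t"]) auto
  have eq: "h t = h0 + integral {a..t} (\<lambda>s. Gf v s (h s))
      \<and> (\<lambda>s. Gf v s (h s)) integrable_on {a..t}" if t: "t \<ge> a" for t
  proof -
    have mc: "(\<lambda>s. Gf v s (h s)) integrable_on {a..t} \<and>
      ((\<lambda>k. integral {a..t} (\<lambda>s. Gf v s (hs k s))) \<longlonglongrightarrow> integral {a..t} (\<lambda>s. Gf v s (h s)))"
    proof (rule monotone_convergence_increasing)
      fix k
      show "(\<lambda>s. Gf v s (hs k s)) integrable_on {a..t}"
        using Pc[of k] vc by (intro integrable_continuous_real Gf_cont sub_Icc)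
    next
      fix k s assume s: "s \<in> {a..t}"
      show "Gf v s (hs k s) \<le> Gf v s (hs (Suc k) s)"
        using M[of s k] Plo[of s k] s h0 by (intro Gf_mono) auto
    next
      fix s assume s: "s \<in> {a..t}"
      show "(\<lambda>k. Gf v s (hs k s)) \<longlonglongrightarrow> Gf v s (h s)"
        unfolding Gf_def using lim[of s] s by (intro tendsto_intros) auto
    next
      have "\<bar>integral {a..t} (\<lambda>s. Gf v s (hs k s))\<bar> \<le> h0 * exp (t - a)" for k
        using Pup[OF t, of "Suc k"] Plo[OF t, of "Suc k"] h0 t unfolding hsS by simp
      then show "bounded (range (\<lambda>k. integral {a..t} (\<lambda>s. Gf v s (hs k s))))"
        unfolding bounded_real by auto
    qed
    have "(\<lambda>k. hs (Suc k) t) \<longlonglongrightarrow> h t" using lim[OF t] by (rule LIMSEQ_Suc)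
    moreover have "(\<lambda>k. hs (Suc k) t) \<longlonglongrightarrow> h0 + integral {a..t} (\<lambda>s. Gf v s (h s))"
      unfolding hsS using mc by (intro tendsto_intros) auto
    ultimately show ?thesis using mc LIMSEQ_unique by blast
  qed
  have hc: "continuous_on {a..} h"
  proof (rule cont_Ici)
    fix b assume "b > a"
    have "continuous_on {a..b} (\<lambda>t. h0 + integral {a..t} (\<lambda>s. Gf v s (h s)))"
      using eq[of b] \<open>b > a\<close> by (intro continuous_intros indefinite_integral_continuous_1) auto
    then show "continuous_on {a..b} h"
      by (rule continuous_on_eq) (use eq in auto)
  qed
  show ?thesis using hc eq hge by blast
qed



lemma deriv_cont_on:
  assumes "\<And>x. x \<in> S \<Longrightarrow> (f has_real_derivative f' x) (at x within S)"
  shows "continuous_on S f"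
  using assms DERIV_continuous continuous_on_eq_continuous_within by blast

lemma div_helper:
  fixes A B R :: real
  assumes "(A - B) * (A + B) = R" "A + B > 0"
  shows "A - B = R / (B + A)"
proof -
  have "R / (B + A) = (A - B) * (A + B) / (A + B)" using assms(1) by (simp add: add.commute)
  also have "\<dots> = A - B" using assms(2) by simp
  finally show ?thesis by simp
qed

lemma uniq:
  fixes v h1 h2 dh1 dh2 :: "real \<Rightarrow> real"
  assumes s1: "ode_sol_in_R0 v phi0 h0 {phi0..<phi1} h1 dh1"
    and s2: "ode_sol_in_R0 v phi0 h0 {phi0..} h2 dh2"
    and vc: "continuous_on {phi0..} v" and vpos: "\<forall>x\<ge>phi0. v x > 0"
    and t: "t \<in> {phi0..<phi1}"
  shows "h1 t = h2 t"
proof -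
  define J where "J = {phi0..t}"
  have JI: "J \<subseteq> {phi0..<phi1}" using t by (auto simp: J_def)
  have d1: "(h1 has_real_derivative dh1 x) (at x within J)" if "x \<in> J" for x
    using s1 that JI unfolding ode_sol_in_R0_def by (meson has_field_derivative_subset subsetD)
  have d2: "(h2 has_real_derivative dh2 x) (at x within J)" if "x \<in> J" for x
    using s2 that JI unfolding ode_sol_in_R0_def
    by (metis (no_types, lifting) atLeastLessThan_iff atLeast_iff has_field_derivative_subset subsetD subsetI)
  have e1: "dh1 x = sqrt ((h1 x)\<^sup>2 - v x) \<and> sqrt (v x) < h1 x" if "x \<in> J" for x
    using s1 that JI unfolding ode_sol_in_R0_def by auto
  have e2: "dh2 x = sqrt ((h2 x)\<^sup>2 - v x) \<and> sqrt (v x) < h2 x" if "x \<in> J" for x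
    using s2 that JI unfolding ode_sol_in_R0_def by auto
  have pos1: "sqrt ((h1 x)\<^sup>2 - v x) > 0" if "x \<in> J" for x
  proof -
    have "v x > 0" using vpos that by (auto simp: J_def)
    then have "(sqrt (v x))^2 < (h1 x)^2" using e1[OF that]
      by (intro power_strict_mono) auto
    then show ?thesis using \<open>v x > 0\<close> by simp
  qed
  have pos2: "sqrt ((h2 x)\<^sup>2 - v x) > 0" if "x \<in> J" for x
  proof -
    have "v x > 0" using vpos that by (auto simp: J_def)
    then have "(sqrt (v x))^2 < (h2 x)^2" using e2[OF that]
      by (intro power_strict_mono) auto
    then show ?thesis using \<open>v x > 0\<close> by simp
  qed
  have c1: "continuous_on J h1" using d1 by (rule deriv_cont_on)
  have c2: "continuous_on J h2" using d2 by (rule deriv_cont_on)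
  have cv: "continuous_on J v" using vc by (rule continuous_on_subset) (auto simp: J_def)
  define c where "c x = (h1 x + h2 x) / (sqrt ((h1 x)\<^sup>2 - v x) + sqrt ((h2 x)\<^sup>2 - v x))" for x
  have cc: "continuous_on J c"
    unfolding c_def using c1 c2 cv pos1 pos2
    by (intro continuous_intros) (use pos1 pos2 in fastforce)+
  define C where "C x = integral {phi0..x} c" for x
  have dC: "(C has_real_derivative c x) (at x within J)" if "x \<in> J" for x
    using cc that unfolding J_def C_def by (rule integral_has_real_derivative)
  have key: "dh2 x - dh1 x = (h2 x - h1 x) * c x" if x: "x \<in> J" for x
  proof -
    let ?a = "sqrt ((h2 x)\<^sup>2 - v x)" and ?b = "sqrt ((h1 x)\<^sup>2 - v x)"
    have ap: "?a > 0" using pos2[OF x] . have bp: "?b > 0" using pos1[OF x] .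
    have "?a^2 = (h2 x)\<^sup>2 - v x" using ap by (smt (verit) real_sqrt_le_0_iff real_sqrt_pow2_iff)
    moreover have "?b^2 = (h1 x)\<^sup>2 - v x" using bp by (smt (verit) real_sqrt_le_0_iff real_sqrt_pow2_iff)
    ultimately have "(?a - ?b) * (?a + ?b) = (h2 x - h1 x) * (h1 x + h2 x)"
      by (simp add: algebra_simps power2_eq_square)
    then have "?a - ?b = (h2 x - h1 x) * (h1 x + h2 x) / (?b + ?a)"
      using ap bp by (intro div_helper) (assumption, linarith)
    then show ?thesis using e1[OF x] e2[OF x] by (simp add: c_def)
  qed
  define f where "f x = (h2 x - h1 x) * exp (- C x)" for x
  have df: "(f has_real_derivative 0) (at x within J)" if x: "x \<in> J" for x
  proof -
    have "(f has_real_derivative ((dh2 x - dh1 x) * exp (- C x) + (h2 x - h1 x) * (exp (- C x) * (- c x)))) (at x within J)"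
      unfolding f_def using d1[OF x] d2[OF x] dC[OF x]
      by (auto intro!: derivative_eq_intros)
    then show ?thesis using key[OF x] by (simp add: algebra_simps)
  qed
  obtain k where k: "\<forall>x\<in>J. f x = k"
    using has_field_derivative_zero_constant[of J f] df by (auto simp: J_def)
  have "phi0 \<in> J" "t \<in> J" using t by (auto simp: J_def)
  then have "f t = f phi0" using k by auto
  also have "f phi0 = 0" using s1 s2 by (simp add: f_def ode_sol_in_R0_def)
  finally show ?thesis by (simp add: f_def)
qed



lemma Gf_eq:
  assumes "v t > 0" "sqrt (v t) < y"
  shows "Gf v t y = sqrt (y\<^sup>2 - v t)"
proof -
  have "(sqrt (v t))^2 < y^2" using assms by (intro power_strict_mono) auto
  then have "v t < y^2" using assms by simp
  then show ?thesis by (simp add: Gf_def)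
qed

theorem proposition2:
  fixes v :: "real \<Rightarrow> real" and phi0 h0 :: real
  assumes smooth: "\<forall>n. \<forall>x\<ge>phi0. ((deriv ^^ n) v) differentiable (at x)"
    and vpos: "\<forall>x\<ge>phi0. v x > 0"
    and vderiv_pos: "\<forall>x\<ge>phi0. deriv v x > 0"
    and h0: "h0 > sqrt (v phi0)"
  shows "(\<exists>phi1 > phi0. \<exists>h dh. ode_sol_in_R0 v phi0 h0 {phi0..<phi1} h dh
            \<and> (h \<longlongrightarrow> sqrt (v phi1)) (at_left phi1)
            \<and> (dh \<longlongrightarrow> 0) (at_left phi1))
       \<noteq> (\<exists>h dh. ode_sol_in_R0 v phi0 h0 {phi0..} h dh)"
    (is "?A \<noteq> ?B")
proof -
  have vc: "continuous_on {phi0..} v"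
  proof (intro continuous_at_imp_continuous_on ballI)
    fix x assume "x \<in> {phi0..}"
    moreover have "\<forall>x\<ge>phi0. ((deriv ^^ 0) v) differentiable (at x)" using smooth by (rule spec)
    ultimately have "v differentiable (at x)" by simp
    then show "isCont v x" by (rule differentiable_imp_continuous_within)
  qed
  have h0p: "h0 > 0" using h0 real_sqrt_ge_zero[of "v phi0"] vpos[rule_format, of phi0] by linarith
  have notboth: "\<not> (?A \<and> ?B)"
  proof
    assume "?A \<and> ?B"
    then obtain phi1 h1 dh1 h2 dh2 where p1: "phi1 > phi0"
      and s1: "ode_sol_in_R0 v phi0 h0 {phi0..<phi1} h1 dh1"
      and l1: "(h1 \<longlongrightarrow> sqrt (v phi1)) (at_left phi1)"
      and s2: "ode_sol_in_R0 v phi0 h0 {phi0..} h2 dh2" by blast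
    have eqh: "h1 t = h2 t" if "t \<in> {phi0..<phi1}" for t
      using uniq[OF s1 s2 vc vpos that] .
    have c2: "continuous_on {phi0..} h2"
      using s2 unfolding ode_sol_in_R0_def by (intro deriv_cont_on) blast
    have "continuous_on {phi0..phi1} h2" using c2 by (rule continuous_on_subset) auto
    then have l2: "(h2 \<longlongrightarrow> h2 phi1) (at_left phi1)"
      using p1 by (rule continuous_on_Icc_at_leftD)
    have "eventually (\<lambda>x. h1 x = h2 x) (at_left phi1)"
      using eventually_at_left_real[OF p1] by eventually_elim (auto intro: eqh)
    then have "(h2 \<longlongrightarrow> sqrt (v phi1)) (at_left phi1)"
      using l1 Lim_transform_eventually by blast
    then have "h2 phi1 = sqrt (v phi1)"
      using l2 tendsto_unique trivial_limit_at_left_real by blast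
    moreover have "sqrt (v phi1) < h2 phi1" using s2 p1 unfolding ode_sol_in_R0_def by auto
    ultimately show False by simp
  qed
  have vnn: "\<And>s. s \<ge> phi0 \<Longrightarrow> v s \<ge> 0" using vpos by (simp add: less_imp_le)
  obtain h where hc: "continuous_on {phi0..} h"
    and hp: "\<forall>t\<ge>phi0. h0 \<le> h t \<and> h t = h0 + integral {phi0..t} (\<lambda>s. Gf v s (h s))"
    using existence[OF vc vnn h0p] by blast
  define dh where "dh t = Gf v t (h t)" for t
  have gc: "continuous_on {phi0..} dh" unfolding dh_def using vc hc by (rule Gf_cont)
  have hd: "(h has_real_derivative dh t) (at t within {phi0..})" if t: "t \<ge> phi0" for t
  proof -
    have "((\<lambda>x. h0 + integral {phi0..x} dh) has_real_derivative dh t) (at t within {phi0..})"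
      using DERIV_add[OF DERIV_const int_deriv[OF gc t]] by simp
    then show ?thesis
      by (rule has_field_derivative_transform_within[where d=1]) (use hp t in \<open>auto simp: dh_def[abs_def]\<close>)
  qed
  have hphi0: "h phi0 = h0" using hp by auto
  have AorB: "?A \<or> ?B"
  proof (cases "{t \<in> {phi0..}. h t \<le> sqrt (v t)} = {}")
    case True
    have "ode_sol_in_R0 v phi0 h0 {phi0..} h dh"
      unfolding ode_sol_in_R0_def
    proof (intro conjI ballI hphi0)
      fix t assume t: "t \<in> {phi0..}"
      show "(h has_real_derivative dh t) (at t within {phi0..})" using hd t by auto
      show lt: "sqrt (v t) < h t" using True t by auto
      show "dh t = sqrt ((h t)\<^sup>2 - v t)" unfolding dh_def using vpos t lt by (intro Gf_eq) auto
    qed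
    then show ?thesis by blast
  next
    case False
    define S where "S = {t \<in> {phi0..}. h t \<le> sqrt (v t)}"
    have Sne: "S \<noteq> {}" using False by (simp add: S_def)
    have cl: "closed S" unfolding S_def
      by (intro continuous_on_closed_Collect_le hc continuous_intros vc)
    have bb: "bdd_below S" unfolding S_def by (rule bdd_belowI[of _ phi0]) auto
    define phi1 where "phi1 = Inf S"
    have inS: "phi1 \<in> S" unfolding phi1_def using Sne bb cl by (rule closed_contains_Inf)
    have ge: "phi1 \<ge> phi0" using inS by (auto simp: S_def)
    have ne: "phi1 \<noteq> phi0" using inS hphi0 h0 by (auto simp: S_def)
    have p1: "phi1 > phi0" using ge ne by simp
    have below: "sqrt (v t) < h t" if "t \<in> {phi0..<phi1}" for t
    proof (rule ccontr)
      assume "\<not> sqrt (v t) < h t"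
      then have "t \<in> S" using that by (auto simp: S_def)
      then have "phi1 \<le> t" unfolding phi1_def using bb by (rule cInf_lower)
      then show False using that by simp
    qed
    have sol: "ode_sol_in_R0 v phi0 h0 {phi0..<phi1} h dh"
      unfolding ode_sol_in_R0_def
    proof (intro conjI ballI hphi0)
      fix t assume t: "t \<in> {phi0..<phi1}"
      show "(h has_real_derivative dh t) (at t within {phi0..<phi1})"
        using hd[of t] t by (auto intro: has_field_derivative_subset)
      show lt: "sqrt (v t) < h t" using below t by auto
      show "dh t = sqrt ((h t)\<^sup>2 - v t)" unfolding dh_def using vpos t lt by (intro Gf_eq) auto
    qed
    have hc1: "continuous_on {phi0..phi1} h" using hc by (rule continuous_on_subset) auto
    have vc1: "continuous_on {phi0..phi1} v" using vc by (rule continuous_on_subset) auto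
    have gc1: "continuous_on {phi0..phi1} dh" using gc by (rule continuous_on_subset) auto
    have lh: "(h \<longlongrightarrow> h phi1) (at_left phi1)" using hc1 p1 by (rule continuous_on_Icc_at_leftD)
    have lv: "((\<lambda>t. sqrt (v t)) \<longlongrightarrow> sqrt (v phi1)) (at_left phi1)"
      using continuous_on_Icc_at_leftD[OF vc1 p1] by (intro tendsto_intros)
    have "sqrt (v phi1) \<le> h phi1"
    proof (rule tendsto_le[OF trivial_limit_at_left_real lh lv])
      show "eventually (\<lambda>t. sqrt (v t) \<le> h t) (at_left phi1)"
        using eventually_at_left_real[OF p1] by eventually_elim (use below in \<open>fastforce intro: less_imp_le\<close>)
    qed
    moreover have "h phi1 \<le> sqrt (v phi1)" using inS by (simp add: S_def)
    ultimately have hv: "h phi1 = sqrt (v phi1)" by simp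
    have "(dh \<longlongrightarrow> dh phi1) (at_left phi1)" using gc1 p1 by (rule continuous_on_Icc_at_leftD)
    moreover have "dh phi1 = 0"
      using hv vpos[rule_format, OF ge] by (simp add: dh_def Gf_def)
    ultimately have "(dh \<longlongrightarrow> 0) (at_left phi1)" by simp
    then have ?A using p1 sol lh hv by auto
    then show ?thesis by blast
  qed
  show ?thesis using notboth AorB by blast
qed


end
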